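(* Let $(f_0, M_0, \Lambda_0, \mathcal{Q}_0)$ be a SIMDG with induced set $\mathcal{P}_0$ and training distribution $P_{\mathrm{tr}}$, and let $R$, $\gamma_0$ and the BCF $f_\star$ be as in the context. Then $f_\star$ is invariant, i.e. $P_{\mathrm{tr}}^{Y-f_\star(X)}=P^{Y-f_\star(X)}$ for all $P\in\mathcal{P}_0$. Moreover, with $f_{\mathrm{LS}}(x):=\mathrm{E}_{P_{\mathrm{tr}}}[Y\mid X=x]$ and $\mathcal{R}(P,f):=\mathrm{E}_P[(Y-f(X))^2]$, $$\mathcal{R}(P_{\mathrm{tr}}, f_\star)=\mathcal{R}(P_{\mathrm{tr}}, f_{\mathrm{LS}})+\mathrm{E}_{P_{\mathrm{tr}}}\Big[\big(\mathrm{E}_{P_{\mathrm{tr}}}[\gamma_0(V)\mid R^\top X]-\mathrm{E}_{P_{\mathrm{tr}}}[\gamma_0(V)\mid X]\big)^2\Big].$$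
   Context: Fix integers $p,r\ge 1$. A SIMDG is a tuple $(f_0, M_0, \Lambda_0, \mathcal{Q}_0)$ where $f_0:\mathbb{R}^p\to\mathbb{R}$ is measurable, $M_0\in\mathbb{R}^{p\times r}$, $\Lambda_0$ is a distribution on $\mathbb{R}^{1+p}$ such that $(U,V)\sim\Lambda_0$ satisfies $\mathrm{E}[(U,V)]=0$ and $\mathrm{E}[\|(U,V)\|_2^2]<\infty$, and $\mathcal{Q}_0$ is a set of distributions on $\mathbb{R}^r$. For each $Q\in\mathcal{Q}_0$ the model induces a distribution $P$ of $(U,V,X,Y,Z)$ by drawing $((U,V),Z)\sim\Lambda_0\otimes Q$ and setting $X = M_0 Z + V$, $Y = f_0(X)+U$; $\mathcal{P}_0$ is the set of all such induced distributions. Standing setting: $\sup_{P\in\mathcal{P}_0}\mathrm{E}_P[f_0(X)]^2<\infty$; $Q_{\mathrm{tr}}\in\mathcal{Q}_0$ satisfies $\mathrm{E}_{Q_{\mathrm{tr}}}[Z]=0$ and $\mathrm{E}_{Q_{\mathrm{tr}}}[ZZ^\top]\succ 0$; $P_{\mathrm{tr}}$ is the distribution induced by $Q_{\mathrm{tr}}$. $P^{W}$ denotes the distribution of $W$ under $P$. Let $q=\mathrm{rank}(M_0)$; if $q<p$, $R\in\mathbb{R}^{p\times(p-q)}$ has columns forming an orthonormal basis of $\ker(M_0^\top)$, and if $q=p$, $R$ is the zero vector in $\mathbb{R}^{p\times 1}$. $\gamma_0(v):=\mathrm{E}_{P_{\mathrm{tr}}}[U\mid V=v]$. The boosted control function is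 $f_\star(x):=f_0(x)+\mathrm{E}_{P_{\mathrm{tr}}}[\gamma_0(V)\mid R^\top X = R^\top x]$ (a fixed function, defined for $P_{\mathrm{tr}}$-a.e. $x$). *)

theory Defs
  imports "HOL-Analysis.Analysis" "HOL-Probability.Probability"
begin

type_synonym ('p, 'r) obs = "real \<times> (real^'p) \<times> (real^'p) \<times> real \<times> (real^'r)"

definition obsU :: "('p::finite, 'r::finite) obs \<Rightarrow> real" where
  "obsU w = (case w of (u, v, x, y, z) \<Rightarrow> u)"
definition obsV :: "('p::finite, 'r::finite) obs \<Rightarrow> real^'p" where
  "obsV w = (case w of (u, v, x, y, z) \<Rightarrow> v)"
definition obsX :: "('p::finite, 'r::finite) obs \<Rightarrow> real^'p" where
  "obsX w = (case w of (u, v, x, y, z) \<Rightarrow> x)"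
definition obsY :: "('p::finite, 'r::finite) obs \<Rightarrow> real" where
  "obsY w = (case w of (u, v, x, y, z) \<Rightarrow> y)"
definition obsZ :: "('p::finite, 'r::finite) obs \<Rightarrow> real^'r" where
  "obsZ w = (case w of (u, v, x, y, z) \<Rightarrow> z)"

text \<open>A SIMDG (f0, M0, Lambda0, Q0); M0 is a p x r matrix (rows indexed by 'p).\<close>
definition is_SIMDG ::
  "(real^'p \<Rightarrow> real) \<Rightarrow> real^'r^'p \<Rightarrow> (real \<times> (real^'p)) measure \<Rightarrow> (real^'r::finite) measure set \<Rightarrow> bool"
  where
  "is_SIMDG f0 M0 \<Lambda>0 \<Q>0 \<longleftrightarrow>
     f0 \<in> borel_measurable borel \<and>
     prob_space \<Lambda>0 \<and> sets \<Lambda>0 = sets borel \<and>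
     integrable \<Lambda>0 (\<lambda>w. w) \<and> integral\<^sup>L \<Lambda>0 (\<lambda>w. w) = 0 \<and>
     integrable \<Lambda>0 (\<lambda>w. (norm w)\<^sup>2) \<and>
     (\<forall>Q\<in>\<Q>0. prob_space Q \<and> sets Q = sets borel)"

definition simdg_induced ::
  "(real^'p \<Rightarrow> real) \<Rightarrow> real^'r^'p \<Rightarrow> (real \<times> (real^'p)) measure \<Rightarrow> (real^'r::finite) measure
     \<Rightarrow> ('p::finite, 'r) obs measure" where
  "simdg_induced f0 M0 \<Lambda>0 Q =
     distr (\<Lambda>0 \<Otimes>\<^sub>M Q) borel
       (\<lambda>((u, v), z). (u, v, M0 *v z + v, f0 (M0 *v z + v) + u, z))"

definition simdg_family ::
  "(real^'p \<Rightarrow> real) \<Rightarrow> real^'r^'p \<Rightarrow> (real \<times> (real^'p)) measure \<Rightarrow> (real^'r::finite) measure set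
     \<Rightarrow> ('p::finite, 'r) obs measure set" where
  "simdg_family f0 M0 \<Lambda>0 \<Q>0 = simdg_induced f0 M0 \<Lambda>0 ` \<Q>0"

definition sigma_rv :: "'a measure \<Rightarrow> ('a \<Rightarrow> 'b::topological_space) \<Rightarrow> 'a measure" where
  "sigma_rv M W = vimage_algebra (space M) W borel"

definition risk :: "('p::finite, 'r::finite) obs measure \<Rightarrow> (real^'p \<Rightarrow> real) \<Rightarrow> real" where
  "risk P f = integral\<^sup>L P (\<lambda>w. (obsY w - f (obsX w))\<^sup>2)"

end

theory Submission
  imports Defs
begin

lemma mv_meas[measurable]: "(\<lambda>z. (M::real^'r::finite^'p::finite) *v z) \<in> borel_measurable borel"
  by (intro borel_measurable_continuous_onI matrix_vector_mult_linear_continuous_on)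

lemma obs_sets: "sets (borel :: ('p::finite,'r::finite) obs measure) = sets (borel \<Otimes>\<^sub>M (borel \<Otimes>\<^sub>M (borel \<Otimes>\<^sub>M (borel \<Otimes>\<^sub>M borel))))"
  by (simp only: borel_prod)

lemma obs_meas[measurable]:
  "(obsU :: ('p::finite,'r::finite) obs \<Rightarrow> _) \<in> borel_measurable borel"
  "(obsV :: ('p::finite,'r::finite) obs \<Rightarrow> _) \<in> borel_measurable borel"
  "(obsX :: ('p::finite,'r::finite) obs \<Rightarrow> _) \<in> borel_measurable borel"
  "(obsY :: ('p::finite,'r::finite) obs \<Rightarrow> _) \<in> borel_measurable borel"
  "(obsZ :: ('p::finite,'r::finite) obs \<Rightarrow> _) \<in> borel_measurable borel"
proof -
  have e: "obsU = (\<lambda>w. fst w)" "obsV = (\<lambda>w. fst (snd w))" "obsX = (\<lambda>w. fst (snd (snd w)))"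
    "obsY = (\<lambda>w. fst (snd (snd (snd w))))" "obsZ = (\<lambda>w. snd (snd (snd (snd w))))"
    by (auto simp: obsU_def obsV_def obsX_def obsY_def obsZ_def fun_eq_iff split: prod.splits)
  show "(obsU :: ('p::finite,'r::finite) obs \<Rightarrow> _) \<in> borel_measurable borel"
    "(obsV :: ('p::finite,'r::finite) obs \<Rightarrow> _) \<in> borel_measurable borel"
    "(obsX :: ('p::finite,'r::finite) obs \<Rightarrow> _) \<in> borel_measurable borel"
    "(obsY :: ('p::finite,'r::finite) obs \<Rightarrow> _) \<in> borel_measurable borel"
    "(obsZ :: ('p::finite,'r::finite) obs \<Rightarrow> _) \<in> borel_measurable borel"
    unfolding e measurable_cong_sets[OF obs_sets refl] by simp_all
qed

lemma T_meas:
  fixes f0 :: "real^'p::finite \<Rightarrow> real" and M0 :: "real^'r::finite^'p"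
  assumes f0[measurable]: "f0 \<in> borel_measurable borel"
    and L: "sets L = sets (borel :: (real \<times> (real^'p)) measure)" and Q: "sets Q = sets (borel :: (real^'r) measure)"
  shows "(\<lambda>((u, v), z). (u, v, M0 *v z + v, f0 (M0 *v z + v) + u, z)) \<in> measurable (L \<Otimes>\<^sub>M Q) (borel :: ('p,'r) obs measure)"
proof -
  have s: "sets (L \<Otimes>\<^sub>M Q) = sets ((borel \<Otimes>\<^sub>M borel) \<Otimes>\<^sub>M (borel :: (real^'r) measure) :: ((real \<times> (real^'p)) \<times> (real^'r)) measure)"
    by (metis L Q borel_prod sets_pair_measure_cong)
  show ?thesis
    unfolding measurable_cong_sets[OF s obs_sets] case_prod_beta' by measurable
qed

lemma sfs:
  assumes "prob_space M" "W \<in> measurable M N"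
  shows "sigma_finite_subalgebra M (vimage_algebra (space M) W N)"
proof -
  interpret prob_space M by fact
  have "subalgebra M (vimage_algebra (space M) W N)"
    unfolding subalgebra_def using sets_image_in_sets[OF refl assms(2)] by simp
  then have "finite_measure_subalgebra M (vimage_algebra (space M) W N)"
    by (simp add: finite_measure_subalgebra_def finite_measure_subalgebra_axioms_def finite_measure_axioms)
  then show ?thesis by (rule finite_measure_subalgebra_is_sigma_finite)
qed

lemma abs_mult_le_sq: "\<bar>a * b\<bar> \<le> a\<^sup>2 + b\<^sup>2" for a b :: real
proof -
  have "0 \<le> (\<bar>a\<bar> - \<bar>b\<bar>)\<^sup>2" by simp
  moreover have "(\<bar>a\<bar> - \<bar>b\<bar>)\<^sup>2 = \<bar>a\<bar>\<^sup>2 + \<bar>b\<bar>\<^sup>2 - 2 * \<bar>a\<bar> * \<bar>b\<bar>" by (rule power2_diff)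
  ultimately have "2 * \<bar>a\<bar> * \<bar>b\<bar> \<le> a\<^sup>2 + b\<^sup>2" by simp
  moreover have "\<bar>a * b\<bar> = \<bar>a\<bar> * \<bar>b\<bar>" by (rule abs_mult)
  moreover have "0 \<le> \<bar>a\<bar> * \<bar>b\<bar>" by simp
  ultimately show ?thesis by linarith
qed

lemma L2_mult:
  fixes f g :: "'a \<Rightarrow> real"
  assumes "integrable M (\<lambda>x. (f x)\<^sup>2)" "integrable M (\<lambda>x. (g x)\<^sup>2)"
    and [measurable]: "f \<in> borel_measurable M" "g \<in> borel_measurable M"
  shows "integrable M (\<lambda>x. f x * g x)"
proof (rule Bochner_Integration.integrable_bound[of _ "\<lambda>x. (f x)\<^sup>2 + (g x)\<^sup>2"])
  show "integrable M (\<lambda>x. (f x)\<^sup>2 + (g x)\<^sup>2)" using assms(1,2) by (rule Bochner_Integration.integrable_add)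
  show "(\<lambda>x. f x * g x) \<in> borel_measurable M" by measurable
  show "AE x in M. norm (f x * g x) \<le> norm ((f x)\<^sup>2 + (g x)\<^sup>2)"
    using abs_mult_le_sq by (intro AE_I2) simp
qed
lemma L2_diff:
  fixes f g :: "'a \<Rightarrow> real"
  assumes "integrable M (\<lambda>x. (f x)\<^sup>2)" "integrable M (\<lambda>x. (g x)\<^sup>2)"
    and [measurable]: "f \<in> borel_measurable M" "g \<in> borel_measurable M"
  shows "integrable M (\<lambda>x. (f x - g x)\<^sup>2)"
proof -
  have e: "(\<lambda>x. (f x - g x)\<^sup>2) = (\<lambda>x. (f x)\<^sup>2 - 2 * (f x * g x) + (g x)\<^sup>2)"
    by (auto simp: power2_eq_square algebra_simps)
  show ?thesis unfolding e
    by (intro Bochner_Integration.integrable_add Bochner_Integration.integrable_diff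
          integrable_mult_right L2_mult assms)
qed

lemma L2_L1:
  fixes f :: "'a \<Rightarrow> real"
  assumes "prob_space M" "integrable M (\<lambda>x. (f x)\<^sup>2)" and [measurable]: "f \<in> borel_measurable M"
  shows "integrable M f"
proof -
  interpret prob_space M by fact
  have ab: "\<bar>a\<bar> \<le> 1 + a\<^sup>2" for a :: real
  proof (cases "\<bar>a\<bar> \<le> 1")
    case False
    then have "\<bar>a\<bar>^1 \<le> \<bar>a\<bar>^2" by (intro power_increasing) auto
    then show ?thesis by simp
  qed (use zero_le_power2[of a] in linarith)
  show ?thesis
  proof (rule Bochner_Integration.integrable_bound[of _ "\<lambda>x. 1 + (f x)\<^sup>2"])
    show "integrable M (\<lambda>x. 1 + (f x)\<^sup>2)"
      using assms(2) by (intro Bochner_Integration.integrable_add) simp_all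
    show "f \<in> borel_measurable M" by fact
    show "AE x in M. norm (f x) \<le> norm (1 + (f x)\<^sup>2)"
      using ab by (intro AE_I2) (simp add: add_nonneg_nonneg)
  qed
qed

lemma L2_cexp:
  fixes f :: "'a \<Rightarrow> real"
  assumes "prob_space M" "sigma_finite_subalgebra M F" "integrable M (\<lambda>x. (f x)\<^sup>2)"
    and [measurable]: "f \<in> borel_measurable M"
  shows "integrable M (\<lambda>x. (real_cond_exp M F f x)\<^sup>2)"
proof (rule sigma_finite_subalgebra.integrable_convex_cond_exp[OF assms(2), where I=UNIV])
  show "integrable M f" by (rule L2_L1[OF assms(1,3,4)])
  show "AE x in M. f x \<in> UNIV" by simp
  show "UNIV = {0<..<0::real} \<or> UNIV = {0::real<..} \<or> UNIV = {..<0::real} \<or> UNIV = (UNIV::real set)" by simp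
  show "integrable M (\<lambda>x. (f x)\<^sup>2)" by fact
  show "convex_on UNIV (\<lambda>x::real. x\<^sup>2)" using convex_power2 by simp
  show "(\<lambda>x::real. x\<^sup>2) \<in> borel_measurable borel" by measurable
  show "emeasure M (space M) = \<infinity> \<Longrightarrow> 0 \<in> UNIV" by simp
qed


lemma RM0:
  fixes M0 :: "real^'r::finite^'p::finite" and R :: "real^'k::finite^'p"
  assumes R_def: "if rank M0 < CARD('p) then
                  CARD('k) = CARD('p) - rank M0 \<and>
                  (\<forall>i j. column i R \<bullet> column j R = (if i = j then 1 else 0)) \<and>
                  span (columns R) = {y. transpose M0 *v y = 0}
                else CARD('k) = 1 \<and> R = 0"
  shows "transpose R *v (M0 *v z) = 0"
proof (cases "rank M0 < CARD('p)")
  case True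
  with R_def have sp: "span (columns R) = {y. transpose M0 *v y = 0}" by simp
  have col: "transpose M0 *v column j R = 0" for j
  proof -
    have "column j R \<in> columns R" by (auto simp: columns_def)
    then have "column j R \<in> span (columns R)" by (rule span_base)
    then show ?thesis using sp by simp
  qed
  have TM: "transpose M0 ** R = 0"
  proof -
    have "(transpose M0 ** R) $ i $ j = (transpose M0 *v column j R) $ i" for i j
      by (simp add: matrix_matrix_mult_def matrix_vector_mult_def column_def transpose_def)
    then show ?thesis using col by (simp add: vec_eq_iff)
  qed
  have "transpose R *v (M0 *v z) = (z v* transpose M0) v* R"
    by (metis transpose_transpose vector_transpose_matrix)
  also have "\<dots> = z v* (transpose M0 ** R)" by (simp only: vector_matrix_mul_assoc)
  also have "\<dots> = 0" using TM by (simp add: vec_eq_iff vector_matrix_mult_def)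
  finally show ?thesis .
next
  case False
  with R_def have "R = 0" by simp
  then show ?thesis by (simp add: vec_eq_iff matrix_vector_mult_def transpose_def)
qed

theorem proposition4:
  fixes f0 :: "real^'p::finite \<Rightarrow> real"
    and M0 :: "real^'r::finite^'p"
    and \<Lambda>0 :: "(real \<times> (real^'p)) measure"
    and \<Q>0 :: "(real^'r) measure set"
    and Qtr :: "(real^'r) measure"
    and Ptr :: "('p, 'r) obs measure"
    and R :: "real^'k::finite^'p"
    and \<gamma>0 :: "real^'p \<Rightarrow> real"
    and g :: "real^'k \<Rightarrow> real"
    and fstar :: "real^'p \<Rightarrow> real"
    and fLS :: "real^'p \<Rightarrow> real"
  assumes simdg: "is_SIMDG f0 M0 \<Lambda>0 \<Q>0"
    and bounded: "\<exists>C. \<forall>P\<in>simdg_family f0 M0 \<Lambda>0 \<Q>0.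
                    integrable P (\<lambda>w. (f0 (obsX w))\<^sup>2) \<and> integral\<^sup>L P (\<lambda>w. (f0 (obsX w))\<^sup>2) \<le> C"
    and Qtr_in: "Qtr \<in> \<Q>0"
    and Qtr_mean: "integrable Qtr (\<lambda>z. z)" "integral\<^sup>L Qtr (\<lambda>z. z) = 0"
    and Qtr_second: "\<forall>i j. integrable Qtr (\<lambda>z. z $ i * z $ j)"
    and Qtr_pd: "\<forall>a::real^'r. a \<noteq> 0 \<longrightarrow>
                   a \<bullet> ((\<chi> i j. integral\<^sup>L Qtr (\<lambda>z. z $ i * z $ j)) *v a) > 0"
    and Ptr_def: "Ptr = simdg_induced f0 M0 \<Lambda>0 Qtr"
    and R_def: "if rank M0 < CARD('p) then
                  CARD('k) = CARD('p) - rank M0 \<and>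
                  (\<forall>i j. column i R \<bullet> column j R = (if i = j then 1 else 0)) \<and>
                  span (columns R) = {y. transpose M0 *v y = 0}
                else CARD('k) = 1 \<and> R = 0"
    and gamma0: "\<gamma>0 \<in> borel_measurable borel"
                "AE w in Ptr. \<gamma>0 (obsV w) = real_cond_exp Ptr (sigma_rv Ptr obsV) obsU w"
    and g_version: "g \<in> borel_measurable borel"
                "AE w in Ptr. g (transpose R *v obsX w) =
                   real_cond_exp Ptr (sigma_rv Ptr (\<lambda>w. transpose R *v obsX w)) (\<lambda>w. \<gamma>0 (obsV w)) w"
    and fstar_def: "fstar = (\<lambda>x. f0 x + g (transpose R *v x))"
    and fLS_version: "fLS \<in> borel_measurable borel"
                "AE w in Ptr. fLS (obsX w) = real_cond_exp Ptr (sigma_rv Ptr obsX) obsY w"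
  shows "(\<forall>P\<in>simdg_family f0 M0 \<Lambda>0 \<Q>0.
            distr Ptr borel (\<lambda>w. obsY w - fstar (obsX w)) = distr P borel (\<lambda>w. obsY w - fstar (obsX w)))
         \<and> risk Ptr fstar =
             risk Ptr fLS +
             integral\<^sup>L Ptr (\<lambda>w.
               (real_cond_exp Ptr (sigma_rv Ptr (\<lambda>w. transpose R *v obsX w)) (\<lambda>w. \<gamma>0 (obsV w)) w
                - real_cond_exp Ptr (sigma_rv Ptr obsX) (\<lambda>w. \<gamma>0 (obsV w)) w)\<^sup>2)"
proof -
  from simdg have f0m[measurable]: "f0 \<in> borel_measurable borel"
    and LP: "prob_space \<Lambda>0" and Ls: "sets \<Lambda>0 = sets borel"
    and Lint: "integrable \<Lambda>0 (\<lambda>w. (norm w)\<^sup>2)"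
    and Qall: "\<And>Q. Q \<in> \<Q>0 \<Longrightarrow> prob_space Q \<and> sets Q = sets borel"
    unfolding is_SIMDG_def by auto
  note [measurable] = gamma0(1) g_version(1) fLS_version(1)
  define T :: "(real \<times> (real^'p)) \<times> (real^'r) \<Rightarrow> ('p,'r) obs"
    where "T = (\<lambda>((u, v), z). (u, v, M0 *v z + v, f0 (M0 *v z + v) + u, z))"
  have Tm: "T \<in> measurable (\<Lambda>0 \<Otimes>\<^sub>M Q) borel" if "sets Q = sets borel" for Q
    unfolding T_def by (rule T_meas[OF f0m Ls that])
  have induced: "simdg_induced f0 M0 \<Lambda>0 Q = distr (\<Lambda>0 \<Otimes>\<^sub>M Q) borel T" for Q
    unfolding simdg_induced_def T_def ..
  have RM: "transpose R *v (M0 *v z) = 0" for z by (rule RM0[OF R_def])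
  have Ls2: "sets \<Lambda>0 = sets (borel \<Otimes>\<^sub>M (borel :: (real^'p) measure) :: (real \<times> (real^'p)) measure)"
    unfolding borel_prod by (rule Ls)
  define h :: "real \<times> (real^'p) \<Rightarrow> real" where "h = (\<lambda>w. fst w - g (transpose R *v snd w))"
  have hm: "h \<in> borel_measurable \<Lambda>0"
    unfolding h_def measurable_cong_sets[OF Ls2 refl] by measurable
  define F :: "('p,'r) obs \<Rightarrow> real" where "F = (\<lambda>w. obsY w - fstar (obsX w))"
  have Fm[measurable]: "F \<in> borel_measurable borel" unfolding F_def fstar_def by measurable
  have RM': "transpose R *v (M0 *v z + v) = transpose R *v v" for z v
    by (simp only: matrix_vector_right_distrib RM add_0_left)
  have FT: "F (T x) = h (fst x)" for x
  proof -
    obtain u v z where x: "x = ((u,v),z)" by (metis prod.collapse)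
    have "F (T x) = (f0 (M0 *v z + v) + u) - (f0 (M0 *v z + v) + g (transpose R *v (M0 *v z + v)))"
      by (simp add: x F_def T_def fstar_def obsY_def obsX_def)
    also have "\<dots> = u - g (transpose R *v v)" unfolding RM' by simp
    also have "\<dots> = h (fst x)" by (simp add: x h_def)
    finally show ?thesis .
  qed
  have inv: "distr (simdg_induced f0 M0 \<Lambda>0 Q) borel F = distr \<Lambda>0 borel h" if Q: "Q \<in> \<Q>0" for Q
  proof -
    from Qall[OF Q] have QP: "prob_space Q" and Qs: "sets Q = sets borel" by auto
    have "distr (simdg_induced f0 M0 \<Lambda>0 Q) borel F = distr (\<Lambda>0 \<Otimes>\<^sub>M Q) borel (F \<circ> T)"
      unfolding induced by (rule distr_distr[OF Fm Tm[OF Qs]])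
    also have "F \<circ> T = h \<circ> fst" using FT by (auto simp: fun_eq_iff)
    also have "distr (\<Lambda>0 \<Otimes>\<^sub>M Q) borel (h \<circ> fst) = distr (distr (\<Lambda>0 \<Otimes>\<^sub>M Q) \<Lambda>0 fst) borel h"
      by (rule distr_distr[symmetric, OF hm measurable_fst])
    also have "distr (\<Lambda>0 \<Otimes>\<^sub>M Q) \<Lambda>0 fst = \<Lambda>0" by (rule prob_space.distr_pair_fst[OF QP])
    finally show ?thesis .
  qed
  have part1: "\<forall>P\<in>simdg_family f0 M0 \<Lambda>0 \<Q>0.
            distr Ptr borel (\<lambda>w. obsY w - fstar (obsX w)) = distr P borel (\<lambda>w. obsY w - fstar (obsX w))"
    using inv Qtr_in unfolding simdg_family_def Ptr_def F_def by auto
  from Qall[OF Qtr_in] have QP: "prob_space Qtr" and Qs: "sets Qtr = sets borel" by auto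
  interpret L: prob_space \<Lambda>0 by (rule LP)
  interpret Q: prob_space Qtr by (rule QP)
  interpret LQ: pair_prob_space \<Lambda>0 Qtr ..
  have PT: "Ptr = distr (\<Lambda>0 \<Otimes>\<^sub>M Qtr) borel T" unfolding Ptr_def induced ..
  have TmQ: "T \<in> measurable (\<Lambda>0 \<Otimes>\<^sub>M Qtr) borel" by (rule Tm[OF Qs])
  have PP: "prob_space Ptr" unfolding PT by (rule LQ.prob_space_distr[OF TmQ])
  interpret P: prob_space Ptr by (rule PP)
  have sP: "sets Ptr = sets borel" unfolding PT by simp
  have spP: "space Ptr = UNIV" unfolding PT by simp
  have mP: "measurable Ptr N = measurable borel N" for N :: "'b measure"
    by (rule measurable_cong_sets[OF sP refl])
  have [measurable]: "obsU \<in> borel_measurable Ptr" "obsV \<in> borel_measurable Ptr"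
    "obsX \<in> borel_measurable Ptr" "obsY \<in> borel_measurable Ptr" "obsZ \<in> borel_measurable Ptr"
    unfolding mP by (rule obs_meas)+
  define UV :: "('p,'r) obs \<Rightarrow> real \<times> (real^'p)" where "UV = (\<lambda>w. (obsU w, obsV w))"
  have UVb: "UV \<in> measurable borel \<Lambda>0"
    unfolding UV_def measurable_cong_sets[OF refl Ls2] by measurable
  have UVm: "UV \<in> measurable Ptr \<Lambda>0" unfolding mP by (rule UVb)
  have UVd: "distr Ptr \<Lambda>0 UV = \<Lambda>0"
  proof -
    have "distr Ptr \<Lambda>0 UV = distr (\<Lambda>0 \<Otimes>\<^sub>M Qtr) \<Lambda>0 (UV \<circ> T)"
      unfolding PT by (rule distr_distr[OF UVb TmQ])
    also have "UV \<circ> T = fst" by (auto simp: fun_eq_iff UV_def T_def obsU_def obsV_def)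
    also have "distr (\<Lambda>0 \<Otimes>\<^sub>M Qtr) \<Lambda>0 fst = \<Lambda>0" by (rule Q.distr_pair_fst)
    finally show ?thesis .
  qed
  have int_tr: "integral\<^sup>L Ptr (\<lambda>w. k (UV w)) = integral\<^sup>L \<Lambda>0 k"
    if "k \<in> borel_measurable \<Lambda>0" for k :: "_ \<Rightarrow> real"
    using integral_distr[OF UVm that] UVd by simp
  have intg_tr: "integrable Ptr (\<lambda>w. k (UV w)) \<longleftrightarrow> integrable \<Lambda>0 k"
    if "k \<in> borel_measurable \<Lambda>0" for k :: "_ \<Rightarrow> real"
    using integrable_distr_eq[OF UVm that] UVd by simp
  have AEY: "AE w in Ptr. obsY w = f0 (obsX w) + obsU w"
  proof -
    have "{w \<in> space borel. obsY w = f0 (obsX w) + obsU w} \<in> sets (borel :: ('p,'r) obs measure)"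
      by measurable
    then show ?thesis unfolding PT
      by (subst AE_distr_iff[OF TmQ]) (auto simp: T_def obsY_def obsX_def obsU_def split: prod.splits)
  qed
  define FX where "FX = sigma_rv Ptr obsX"
  define FR where "FR = sigma_rv Ptr (\<lambda>w. transpose R *v obsX w)"
  define FV where "FV = sigma_rv Ptr obsV"
  have sfX: "sigma_finite_subalgebra Ptr FX" unfolding FX_def sigma_rv_def by (rule sfs[OF PP]) measurable
  have sfR: "sigma_finite_subalgebra Ptr FR" unfolding FR_def sigma_rv_def by (rule sfs[OF PP]) measurable
  have sfV: "sigma_finite_subalgebra Ptr FV" unfolding FV_def sigma_rv_def by (rule sfs[OF PP]) measurable
  have oX: "obsX \<in> measurable FX borel" unfolding FX_def sigma_rv_def
    by (rule measurable_vimage_algebra1) simp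
  have oV: "obsV \<in> measurable FV borel" unfolding FV_def sigma_rv_def
    by (rule measurable_vimage_algebra1) simp
  have subXR: "subalgebra FX FR"
    unfolding subalgebra_def
  proof
    show "space FR = space FX" unfolding FR_def FX_def sigma_rv_def by simp
    have "(\<lambda>w. transpose R *v obsX w) \<in> measurable FX borel"
      by (rule measurable_compose[OF oX mv_meas])
    then show "sets FR \<subseteq> sets FX" unfolding FR_def sigma_rv_def
      by (intro sets_image_in_sets) (simp_all add: FX_def sigma_rv_def)
  qed
  define G :: "('p,'r) obs \<Rightarrow> real" where "G = (\<lambda>w. \<gamma>0 (obsV w))"
  define A where "A = real_cond_exp Ptr FR G"
  define B where "B = real_cond_exp Ptr FX G"
  have Gm[measurable]: "G \<in> borel_measurable Ptr" unfolding G_def by measurable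
  have Am[measurable]: "A \<in> borel_measurable Ptr" unfolding A_def by (rule borel_measurable_cond_exp2)
  have Bm[measurable]: "B \<in> borel_measurable Ptr" unfolding B_def by (rule borel_measurable_cond_exp2)
  have BX: "B \<in> borel_measurable FX" unfolding B_def by (rule borel_measurable_cond_exp)
  have AX: "A \<in> borel_measurable FX" unfolding A_def
    by (rule measurable_from_subalg[OF subXR borel_measurable_cond_exp])
  have BAX: "(\<lambda>w. B w - A w) \<in> borel_measurable FX" using AX BX by measurable
  have U2: "integrable Ptr (\<lambda>w. (obsU w)\<^sup>2)"
  proof -
    have k: "(\<lambda>w::real \<times> (real^'p). (fst w)\<^sup>2) \<in> borel_measurable \<Lambda>0"
      unfolding measurable_cong_sets[OF Ls2 refl] by measurable
    have "integrable \<Lambda>0 (\<lambda>w::real \<times> (real^'p). (fst w)\<^sup>2)"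
    proof (rule Bochner_Integration.integrable_bound[OF Lint k])
      show "AE x in \<Lambda>0. norm ((fst x)\<^sup>2) \<le> norm ((norm x)\<^sup>2)"
        by (intro AE_I2) (auto simp: norm_Pair)
    qed
    then show ?thesis using intg_tr[OF k] by (simp add: UV_def)
  qed
  have U1: "integrable Ptr obsU" by (rule L2_L1[OF PP U2]) measurable
  have G2: "integrable Ptr (\<lambda>w. (G w)\<^sup>2)"
  proof -
    have "integrable Ptr (\<lambda>w. (real_cond_exp Ptr FV obsU w)\<^sup>2)"
      by (rule L2_cexp[OF PP sfV U2]) measurable
    moreover have "AE w in Ptr. (G w)\<^sup>2 = (real_cond_exp Ptr FV obsU w)\<^sup>2"
      using gamma0(2) by eventually_elim (simp add: G_def FV_def)
    ultimately show ?thesis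
      by (subst integrable_cong_AE[where g="\<lambda>w. (real_cond_exp Ptr FV obsU w)\<^sup>2"]) auto
  qed
  have G1: "integrable Ptr G" by (rule L2_L1[OF PP G2 Gm])
  have A2: "integrable Ptr (\<lambda>w. (A w)\<^sup>2)" unfolding A_def by (rule L2_cexp[OF PP sfR G2 Gm])
  have B2: "integrable Ptr (\<lambda>w. (B w)\<^sup>2)" unfolding B_def by (rule L2_cexp[OF PP sfX G2 Gm])
  have B1: "integrable Ptr B" by (rule L2_L1[OF PP B2 Bm])
  have f0X2: "integrable Ptr (\<lambda>w. (f0 (obsX w))\<^sup>2)"
  proof -
    have "Ptr \<in> simdg_family f0 M0 \<Lambda>0 \<Q>0" unfolding simdg_family_def Ptr_def using Qtr_in by simp
    then show ?thesis using bounded by auto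
  qed
  have f0X1: "integrable Ptr (\<lambda>w. f0 (obsX w))" by (rule L2_L1[OF PP f0X2]) measurable
  have KL: "(\<integral>w. indicator S w * obsU w \<partial>Ptr) = (\<integral>w. indicator S w * G w \<partial>Ptr)"
    if S: "S \<in> sets FX" for S
  proof -
    have "S \<in> {obsX -` A \<inter> space Ptr | A. A \<in> sets borel}"
      using S unfolding FX_def sigma_rv_def by (subst (asm) sets_vimage_algebra2) auto
    then obtain S' where S'[measurable]: "S' \<in> sets borel" and SS: "S = obsX -` S' \<inter> space Ptr" by auto
    have ind: "indicator S w = indicator S' (obsX w)" for w :: "('p,'r) obs"
      by (simp add: SS spP indicator_def)
    define \<phi> where "\<phi> = (\<lambda>w. indicator S' (obsX w) * (obsU w - G w))"
    have \<phi>b[measurable]: "\<phi> \<in> borel_measurable borel" unfolding \<phi>_def G_def by measurable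
    have \<phi>m[measurable]: "\<phi> \<in> borel_measurable Ptr" unfolding mP by (rule \<phi>b)
    have UG: "integrable Ptr (\<lambda>w. obsU w - G w)" using U1 G1 by (rule Bochner_Integration.integrable_diff)
    have \<phi>i: "integrable Ptr \<phi>"
    proof (rule Bochner_Integration.integrable_bound[OF UG \<phi>m])
      show "AE x in Ptr. norm (\<phi> x) \<le> norm (obsU x - G x)"
        by (intro AE_I2) (auto simp: \<phi>_def indicator_def)
    qed
    have \<phi>T: "integrable (\<Lambda>0 \<Otimes>\<^sub>M Qtr) (\<lambda>x. \<phi> (T x))"
      using \<phi>i unfolding PT by (subst (asm) integrable_distr_eq[OF TmQ \<phi>b])
    have inner: "(\<integral>uv. \<phi> (T (uv, z)) \<partial>\<Lambda>0) = 0" for z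
    proof -
      define \<psi> :: "real^'p \<Rightarrow> real" where "\<psi> = (\<lambda>v. indicator S' (M0 *v z + v))"
      have \<psi>m[measurable]: "\<psi> \<in> borel_measurable borel" unfolding \<psi>_def by measurable
      define k :: "real \<times> (real^'p) \<Rightarrow> real" where "k = (\<lambda>uv. \<psi> (snd uv) * (fst uv - \<gamma>0 (snd uv)))"
      have km: "k \<in> borel_measurable \<Lambda>0"
        unfolding k_def measurable_cong_sets[OF Ls2 refl] by measurable
      have e1: "\<phi> (T (uv, z)) = k uv" for uv
        by (cases uv) (simp add: \<phi>_def T_def k_def \<psi>_def obsX_def obsU_def obsV_def G_def)
      have \<psi>V: "(\<lambda>w. \<psi> (obsV w)) \<in> borel_measurable FV" by (rule measurable_compose[OF oV \<psi>m])
      have \<psi>U: "integrable Ptr (\<lambda>w. \<psi> (obsV w) * obsU w)"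
      proof (rule Bochner_Integration.integrable_bound[OF U1])
        show "(\<lambda>w. \<psi> (obsV w) * obsU w) \<in> borel_measurable Ptr" by measurable
        show "AE x in Ptr. norm (\<psi> (obsV x) * obsU x) \<le> norm (obsU x)"
          by (intro AE_I2) (auto simp: \<psi>_def indicator_def)
      qed
      have \<psi>G: "integrable Ptr (\<lambda>w. \<psi> (obsV w) * G w)"
      proof (rule Bochner_Integration.integrable_bound[OF G1])
        show "(\<lambda>w. \<psi> (obsV w) * G w) \<in> borel_measurable Ptr" by measurable
        show "AE x in Ptr. norm (\<psi> (obsV x) * G x) \<le> norm (G x)"
          by (intro AE_I2) (auto simp: \<psi>_def indicator_def)
      qed
      have "(\<integral>w. \<psi> (obsV w) * G w \<partial>Ptr) = (\<integral>w. \<psi> (obsV w) * real_cond_exp Ptr FV obsU w \<partial>Ptr)"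
        by (rule integral_cong_AE) (use gamma0(2) in \<open>auto simp: G_def FV_def\<close>)
      also have "\<dots> = (\<integral>w. \<psi> (obsV w) * obsU w \<partial>Ptr)"
        by (rule sigma_finite_subalgebra.real_cond_exp_intg(2)[OF sfV \<psi>U \<psi>V]) measurable
      finally have eqG: "(\<integral>w. \<psi> (obsV w) * G w \<partial>Ptr) = (\<integral>w. \<psi> (obsV w) * obsU w \<partial>Ptr)" .
      have "(\<integral>uv. \<phi> (T (uv, z)) \<partial>\<Lambda>0) = integral\<^sup>L \<Lambda>0 k" by (simp add: e1)
      also have "\<dots> = (\<integral>w. k (UV w) \<partial>Ptr)" by (rule int_tr[OF km, symmetric])
      also have "\<dots> = (\<integral>w. \<psi> (obsV w) * obsU w - \<psi> (obsV w) * G w \<partial>Ptr)"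
        by (simp add: k_def UV_def G_def algebra_simps)
      also have "\<dots> = 0" using \<psi>U \<psi>G eqG by simp
      finally show ?thesis .
    qed
    have "integral\<^sup>L Ptr \<phi> = (\<integral>x. \<phi> (T x) \<partial>(\<Lambda>0 \<Otimes>\<^sub>M Qtr))"
      unfolding PT by (rule integral_distr[OF TmQ \<phi>b])
    also have "\<dots> = (\<integral>z. (\<integral>uv. \<phi> (T (uv, z)) \<partial>\<Lambda>0) \<partial>Qtr)"
    proof -
      have eta: "(\<lambda>(uv, z). \<phi> (T (uv, z))) = (\<lambda>x. \<phi> (T x))" by auto
      have i: "integrable (\<Lambda>0 \<Otimes>\<^sub>M Qtr) (\<lambda>(uv, z). \<phi> (T (uv, z)))" using \<phi>T by (simp only: eta)
      show ?thesis using LQ.integral_snd[OF i] by (simp only: eta)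
    qed
    also have "\<dots> = 0" by (simp add: inner)
    finally have \<phi>0: "integral\<^sup>L Ptr \<phi> = 0" .
    have iU: "integrable Ptr (\<lambda>w. indicator S w * obsU w)"
    proof (rule Bochner_Integration.integrable_bound[OF U1])
      show "(\<lambda>w. indicator S w * obsU w) \<in> borel_measurable Ptr" unfolding ind by measurable
      show "AE x in Ptr. norm (indicator S x * obsU x) \<le> norm (obsU x)"
        by (intro AE_I2) (auto simp: indicator_def)
    qed
    have iG: "integrable Ptr (\<lambda>w. indicator S w * G w)"
    proof (rule Bochner_Integration.integrable_bound[OF G1])
      show "(\<lambda>w. indicator S w * G w) \<in> borel_measurable Ptr" unfolding ind by measurable
      show "AE x in Ptr. norm (indicator S x * G x) \<le> norm (G x)"
        by (intro AE_I2) (auto simp: indicator_def)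
    qed
    have "(\<integral>w. indicator S w * obsU w \<partial>Ptr) - (\<integral>w. indicator S w * G w \<partial>Ptr)
          = (\<integral>w. indicator S w * obsU w - indicator S w * G w \<partial>Ptr)"
      using iU iG by simp
    also have "\<dots> = integral\<^sup>L Ptr \<phi>" by (simp add: \<phi>_def ind algebra_simps)
    finally show ?thesis using \<phi>0 by simp
  qed
  have K: "AE w in Ptr. real_cond_exp Ptr FX obsU w = B w"
  proof (rule sigma_finite_subalgebra.real_cond_exp_charact[OF sfX])
    fix S assume S: "S \<in> sets FX"
    have "(\<integral>x\<in>S. B x \<partial>Ptr) = (\<integral>x\<in>S. G x \<partial>Ptr)"
      unfolding B_def by (rule sigma_finite_subalgebra.real_cond_exp_intA[OF sfX G1 S, symmetric])
    moreover have "(\<integral>x\<in>S. obsU x \<partial>Ptr) = (\<integral>x\<in>S. G x \<partial>Ptr)"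
      using KL[OF S] by (simp add: set_lebesgue_integral_def)
    ultimately show "(\<integral>x\<in>S. obsU x \<partial>Ptr) = (\<integral>x\<in>S. B x \<partial>Ptr)" by simp
  qed (use U1 B1 BX in auto)
  have CC: "AE w in Ptr. real_cond_exp Ptr FX obsY w = f0 (obsX w) + B w"
  proof -
    have c1: "AE w in Ptr. real_cond_exp Ptr FX obsY w = real_cond_exp Ptr FX (\<lambda>w. f0 (obsX w) + obsU w) w"
      by (rule sigma_finite_subalgebra.real_cond_exp_cong[OF sfX AEY]) measurable
    have c2: "AE w in Ptr. real_cond_exp Ptr FX (\<lambda>w. f0 (obsX w) + obsU w) w
        = real_cond_exp Ptr FX (\<lambda>w. f0 (obsX w)) w + real_cond_exp Ptr FX obsU w"
      by (rule sigma_finite_subalgebra.real_cond_exp_add[OF sfX f0X1 U1])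
    have c3: "AE w in Ptr. real_cond_exp Ptr FX (\<lambda>w. f0 (obsX w)) w = f0 (obsX w)"
      by (rule sigma_finite_subalgebra.real_cond_exp_F_meas[OF sfX f0X1 measurable_compose[OF oX f0m]])
    show ?thesis using c1 c2 c3 K by eventually_elim simp
  qed
  have R1: "risk Ptr fstar = (\<integral>w. (obsU w - A w)\<^sup>2 \<partial>Ptr)"
    unfolding risk_def
  proof (rule integral_cong_AE)
    show "AE w in Ptr. (obsY w - fstar (obsX w))\<^sup>2 = (obsU w - A w)\<^sup>2"
      using AEY g_version(2) by eventually_elim (simp add: fstar_def A_def FR_def G_def)
  qed (unfold fstar_def, measurable)
  have R2: "risk Ptr fLS = (\<integral>w. (obsU w - B w)\<^sup>2 \<partial>Ptr)"
    unfolding risk_def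
  proof (rule integral_cong_AE)
    show "AE w in Ptr. (obsY w - fLS (obsX w))\<^sup>2 = (obsU w - B w)\<^sup>2"
      using AEY fLS_version(2) CC by eventually_elim (simp add: FX_def)
  qed measurable
  have BA2: "integrable Ptr (\<lambda>w. (B w - A w)\<^sup>2)" by (rule L2_diff[OF B2 A2 Bm Am])
  have UB2: "integrable Ptr (\<lambda>w. (obsU w - B w)\<^sup>2)" by (rule L2_diff[OF U2 B2]) measurable
  have AB2: "integrable Ptr (\<lambda>w. (A w - B w)\<^sup>2)" by (rule L2_diff[OF A2 B2 Am Bm])
  have BAU: "integrable Ptr (\<lambda>w. (B w - A w) * obsU w)" by (rule L2_mult[OF BA2 U2]) measurable
  have BAB: "integrable Ptr (\<lambda>w. (B w - A w) * B w)" by (rule L2_mult[OF BA2 B2]) measurable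
  have I1: "(\<integral>w. (B w - A w) * obsU w \<partial>Ptr) = (\<integral>w. (B w - A w) * B w \<partial>Ptr)"
  proof -
    have "(\<integral>w. (B w - A w) * obsU w \<partial>Ptr) = (\<integral>w. (B w - A w) * real_cond_exp Ptr FX obsU w \<partial>Ptr)"
      by (rule sigma_finite_subalgebra.real_cond_exp_intg(2)[OF sfX BAU BAX, symmetric]) measurable
    also have "\<dots> = (\<integral>w. (B w - A w) * B w \<partial>Ptr)"
      by (rule integral_cong_AE) (use K in auto)
    finally show ?thesis .
  qed
  have main: "(\<integral>w. (obsU w - A w)\<^sup>2 \<partial>Ptr) = (\<integral>w. (obsU w - B w)\<^sup>2 \<partial>Ptr) + (\<integral>w. (A w - B w)\<^sup>2 \<partial>Ptr)"
  proof -
    have "(\<integral>w. (obsU w - A w)\<^sup>2 \<partial>Ptr) = (\<integral>w. ((obsU w - B w)\<^sup>2 + (A w - B w)\<^sup>2)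
            + (2 * ((B w - A w) * obsU w) - 2 * ((B w - A w) * B w)) \<partial>Ptr)"
      by (rule Bochner_Integration.integral_cong) (auto simp: power2_eq_square algebra_simps)
    also have "\<dots> = (\<integral>w. (obsU w - B w)\<^sup>2 + (A w - B w)\<^sup>2 \<partial>Ptr)
            + (\<integral>w. 2 * ((B w - A w) * obsU w) - 2 * ((B w - A w) * B w) \<partial>Ptr)"
      using UB2 AB2 BAU BAB by (intro Bochner_Integration.integral_add) auto
    also have "(\<integral>w. 2 * ((B w - A w) * obsU w) - 2 * ((B w - A w) * B w) \<partial>Ptr)
             = 2 * (\<integral>w. (B w - A w) * obsU w \<partial>Ptr) - 2 * (\<integral>w. (B w - A w) * B w \<partial>Ptr)"
      using BAU BAB by simp
    also have "(\<integral>w. (obsU w - B w)\<^sup>2 + (A w - B w)\<^sup>2 \<partial>Ptr)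
             = (\<integral>w. (obsU w - B w)\<^sup>2 \<partial>Ptr) + (\<integral>w. (A w - B w)\<^sup>2 \<partial>Ptr)"
      using UB2 AB2 by simp
    finally show ?thesis using I1 by simp
  qed
  show ?thesis
  proof (intro conjI part1)
    show "risk Ptr fstar = risk Ptr fLS + integral\<^sup>L Ptr (\<lambda>w.
               (real_cond_exp Ptr (sigma_rv Ptr (\<lambda>w. transpose R *v obsX w)) (\<lambda>w. \<gamma>0 (obsV w)) w
                - real_cond_exp Ptr (sigma_rv Ptr obsX) (\<lambda>w. \<gamma>0 (obsV w)) w)\<^sup>2)"
      using R1 R2 main unfolding A_def B_def FR_def FX_def G_def by simp
  qed
qed

end
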